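(* Let $f$ satisfy the standing assumptions below, let $t>0$, $x\in\mathbb{R}$, and let $\Phi_1(\xi,u_1,u_2,u_3)$ be as defined in the context. Then for each $t$ and each $0<u_3<u_2<u_1<1$, $$\lim_{\xi\to0}\Phi_1(\xi,u_1,u_2,u_3)=-\infty,\qquad\lim_{\xi\to1}\Phi_1(\xi,u_1,u_2,u_3)=+\infty .$$
   Context: Standing assumptions: $f:(0,1)\to\mathbb{R}$ is the inverse of a smooth strictly decreasing function $u_0:\mathbb{R}\to(0,1)$ with $u_0(-\infty)=1$, $u_0(+\infty)=0$; thus $f$ is smooth with $f'<0$, $f(0^+)=+\infty$, $f(1^-)=-\infty$; moreover $f'''(u)<0$ for $u$ in a neighborhood of $0$ and of $1$. Let $H(u)=x-30tu^2-f(u)$. $\Phi_1(\xi,u_1,u_2,u_3)$ is the unique solution of the Euler–Poisson–Darboux system $2(u_i-u_j)\partial_{u_i}\partial_{u_j}\Phi_1=\partial_{u_i}\Phi_1-\partial_{u_j}\Phi_1$ ($i,j=1,2,3$), $2(\xi-u_i)\partial_\xi\partial_{u_i}\Phi_1=\partial_\xi\Phi_1-2\partial_{u_i}\Phi_1$ ($i=1,2,3$), with boundary condition $\Phi_1(u,u,u,u)=\frac23H''(u)=\frac23(-60t-f''(u))$; explicitly $$\Phi_1=M\int_{[-1,1]^3}\frac{H''\!\left(\frac{1+\mu_3}{2}\left(\frac{1+\mu_2}{2}\left(\frac{1+\mu_1}{2}\xi+\frac{1-\mu_1}{2}u_1\right)+\frac{1-\mu_2}{2}u_2\right)+\frac{1-\mu_3}{2}u_3\right)}{\sqrt{(1-\mu_1)(1-\mu_2)(1-\mu_3)}}(1+\mu_2)^{1/2}(1+\mu_3)\,d\mu_1d\mu_2d\mu_3,$$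 with the constant $M$ chosen so that the boundary condition holds. *)

theory Defs
  imports "HOL-Analysis.Analysis"
begin

definition smooth_on :: "real set \<Rightarrow> (real \<Rightarrow> real) \<Rightarrow> bool" where
  "smooth_on S g \<longleftrightarrow> (\<forall>n::nat. \<forall>y\<in>S. ((deriv ^^ n) g) differentiable (at y))"

definition standing_assumptions :: "(real \<Rightarrow> real) \<Rightarrow> bool" where
  "standing_assumptions f \<longleftrightarrow>
     (\<exists>u0 :: real \<Rightarrow> real.
        smooth_on UNIV u0 \<and>
        (\<forall>a b. a < b \<longrightarrow> u0 b < u0 a) \<and>
        (\<forall>y. u0 y \<in> {0<..<1}) \<and>
        (u0 \<longlongrightarrow> 1) at_bot \<and> (u0 \<longlongrightarrow> 0) at_top \<and>
        (\<forall>y. f (u0 y) = y) \<and> (\<forall>u\<in>{0<..<1}. u0 (f u) = u)) \<and>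
     smooth_on {0<..<1} f \<and>
     (\<forall>u\<in>{0<..<1}. deriv f u < 0) \<and>
     filterlim f at_top (at_right 0) \<and> filterlim f at_bot (at_left 1) \<and>
     (\<exists>d>0. \<forall>u\<in>{0<..<d}. (deriv ^^ 3) f u < 0) \<and>
     (\<exists>d>0. \<forall>u\<in>{1-d<..<1}. (deriv ^^ 3) f u < 0)"

definition H :: "(real \<Rightarrow> real) \<Rightarrow> real \<Rightarrow> real \<Rightarrow> real \<Rightarrow> real" where
  "H f t x u = x - 30 * t * u^2 - f u"

definition cube3 :: "(real \<times> real \<times> real) set" where
  "cube3 = {-1..1} \<times> {-1..1} \<times> {-1..1}"

definition phi_weight :: "real \<times> real \<times> real \<Rightarrow> real" where
  "phi_weight m = (case m of (m1, m2, m3) \<Rightarrow>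
      sqrt (1 + m2) * (1 + m3) / sqrt ((1 - m1) * (1 - m2) * (1 - m3)))"

definition phi_point :: "real \<Rightarrow> real \<Rightarrow> real \<Rightarrow> real \<Rightarrow> real \<times> real \<times> real \<Rightarrow> real" where
  "phi_point xi u1 u2 u3 m = (case m of (m1, m2, m3) \<Rightarrow>
      (1 + m3)/2 * ((1 + m2)/2 * ((1 + m1)/2 * xi + (1 - m1)/2 * u1) + (1 - m2)/2 * u2)
      + (1 - m3)/2 * u3)"

(* M chosen so that Phi_1(u,u,u,u) = 2/3 H''(u) *)
definition Mconst :: real where
  "Mconst = (2/3) / (set_lebesgue_integral lborel cube3 phi_weight)"

definition Phi1 :: "(real \<Rightarrow> real) \<Rightarrow> real \<Rightarrow> real \<Rightarrow> real \<Rightarrow> real \<Rightarrow> real \<Rightarrow> real \<Rightarrow> real" where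
  "Phi1 f t x xi u1 u2 u3 = Mconst *
     set_lebesgue_integral lborel cube3
       (\<lambda>m. (deriv ^^ 2) (H f t x) (phi_point xi u1 u2 u3 m) * phi_weight m)"

end

theory Submission
  imports Defs
begin




lemma lborel3_eq: "(lborel :: (real \<times> real \<times> real) measure) = lborel \<Otimes>\<^sub>M (lborel \<Otimes>\<^sub>M lborel)"
  by (simp add: lborel_prod)

lemma nn_prod3:
  fixes g1 g2 g3 :: "real \<Rightarrow> ennreal"
  assumes [measurable]: "g1 \<in> borel_measurable borel" "g2 \<in> borel_measurable borel" "g3 \<in> borel_measurable borel"
  shows "(\<integral>\<^sup>+ m. g1 (fst m) * g2 (fst (snd m)) * g3 (snd (snd m)) \<partial>lborel)
        = (\<integral>\<^sup>+ x. g1 x \<partial>lborel) * (\<integral>\<^sup>+ x. g2 x \<partial>lborel) * (\<integral>\<^sup>+ x. g3 x \<partial>lborel)"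
proof -
  have 2: "(\<integral>\<^sup>+ y. g2 (fst y) * g3 (snd y) \<partial>(lborel :: (real \<times> real) measure))
      = (\<integral>\<^sup>+ x. g2 x \<partial>lborel) * (\<integral>\<^sup>+ x. g3 x \<partial>lborel)"
    unfolding lborel_prod[symmetric]
    by (subst lborel.nn_integral_fst[symmetric]) (simp_all add: nn_integral_cmult nn_integral_multc)
  show ?thesis
    unfolding lborel3_eq
    apply (subst lborel_pair.nn_integral_fst[symmetric])
    apply measurable
    apply (simp add: mult.assoc nn_integral_cmult nn_integral_multc)
    using 2 unfolding lborel_prod[symmetric] by (simp add: mult.assoc)
qed



lemma k_int: "(\<integral>\<^sup>+ m. ennreal (indicator {-1..1} m * (1 - m) powr (-1/2)) \<partial>lborel) = ennreal (2 * sqrt 2)"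
proof -
  have "(\<integral>\<^sup>+ m. ennreal (indicator {-1..1} m * (1 - m) powr (-1/2)) \<partial>lborel)
     = (\<integral>\<^sup>+ x. ennreal (indicator {-1..1} (1 + (-1) * x) * (1 - (1 + (-1) * x)) powr (-1/2)) \<partial>lborel)"
    using nn_integral_real_affine[of "\<lambda>m. ennreal (indicator {-1..1} m * (1 - m) powr (-1/2))" "-1" 1]
    by simp
  also have "\<dots> = (\<integral>\<^sup>+ x. ennreal (indicator {0..2} x * x powr (-1/2)) \<partial>lborel)"
    by (auto intro!: nn_integral_cong simp: indicator_def)
  also have "\<dots> = ennreal (2 powr (-1/2+1) / (-1/2+1))"
    apply (rule nn_integral_has_integral_lebesgue)
     apply simp
    using has_integral_powr_from_0[of "-1/2" 2] by simp
  also have "2 powr (-1/2+1) / (-1/2+1) = 2 * sqrt (2::real)"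
    by (simp add: powr_half_sqrt)
  finally show ?thesis .
qed



lemma phi_weight_alt: "phi_weight m = sqrt (1 + fst (snd m)) * (1 + snd (snd m)) / sqrt ((1 - fst m) * (1 - fst (snd m)) * (1 - snd (snd m)))"
  unfolding phi_weight_def by (simp add: case_prod_beta)

lemma meas_fst3[measurable]: "(\<lambda>x::real\<times>real\<times>real. fst x) \<in> borel_measurable borel"
  by (intro borel_measurable_continuous_onI continuous_intros)
lemma meas_fst_snd3[measurable]: "(\<lambda>x::real\<times>real\<times>real. fst (snd x)) \<in> borel_measurable borel"
  by (intro borel_measurable_continuous_onI continuous_intros)
lemma meas_snd_snd3[measurable]: "(\<lambda>x::real\<times>real\<times>real. snd (snd x)) \<in> borel_measurable borel"
  by (intro borel_measurable_continuous_onI continuous_intros)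

lemma phi_weight_meas[measurable]: "phi_weight \<in> borel_measurable borel"
  unfolding phi_weight_alt[abs_def] by measurable

lemma cube3_mem: "m \<in> cube3 \<longleftrightarrow> fst m \<in> {-1..1} \<and> fst (snd m) \<in> {-1..1} \<and> snd (snd m) \<in> {-1..1}"
  unfolding cube3_def by (cases m) auto

lemma cube3_borel[measurable]: "cube3 \<in> sets borel"
  unfolding cube3_def by (auto intro!: borel_closed closed_Times)

lemma phi_weight_nonneg: "m \<in> cube3 \<Longrightarrow> 0 \<le> phi_weight m"
  unfolding phi_weight_alt cube3_mem by (auto intro!: divide_nonneg_nonneg mult_nonneg_nonneg)

definition kk :: "real \<Rightarrow> real" where "kk m = indicator {-1..1} m * (1 - m) powr (-1/2)"

lemma kk_meas[measurable]: "kk \<in> borel_measurable borel"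
  unfolding kk_def by measurable

lemma kk_nonneg: "0 \<le> kk m" unfolding kk_def by auto

lemma inv_sqrt_powr: "0 \<le> a \<Longrightarrow> 1 / sqrt a = a powr (-1/2)"
  by (cases "a = 0") (simp_all add: powr_minus_divide powr_half_sqrt[symmetric])


lemma phi_weight_bound: "m \<in> cube3 \<Longrightarrow> phi_weight m \<le> 4 * (kk (fst m) * kk (fst (snd m)) * kk (snd (snd m)))"
proof -
  assume m: "m \<in> cube3"
  define a1 where "a1 = 1 - fst m"
  define a2 where "a2 = 1 - fst (snd m)"
  define a3 where "a3 = 1 - snd (snd m)"
  have a: "0 \<le> a1" "0 \<le> a2" "0 \<le> a3" "a2 \<le> 2" "a3 \<le> 2" using m unfolding cube3_mem a1_def a2_def a3_def by auto
  have k: "kk (fst m) = 1 / sqrt a1" "kk (fst (snd m)) = 1 / sqrt a2" "kk (snd (snd m)) = 1 / sqrt a3"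
    using m a unfolding cube3_mem a1_def a2_def a3_def kk_def by (auto simp: inv_sqrt_powr)
  have n: "sqrt (1 + fst (snd m)) * (1 + snd (snd m)) \<le> 4"
  proof -
    have "sqrt (1 + fst (snd m)) \<le> sqrt (2^2)" by (rule real_sqrt_le_mono) (use m in \<open>auto simp: cube3_mem\<close>)
    then have "sqrt (1 + fst (snd m)) \<le> 2" by simp
    moreover have "1 + snd (snd m) \<le> 2" "0 \<le> 1 + snd (snd m)" using m unfolding cube3_mem by auto
    ultimately show ?thesis using mult_mono[of "sqrt (1 + fst (snd m))" 2 "1 + snd (snd m)" 2] by simp
  qed
  have "phi_weight m = sqrt (1 + fst (snd m)) * (1 + snd (snd m)) * (1 / sqrt a1 * (1 / sqrt a2) * (1 / sqrt a3))"
    unfolding phi_weight_alt a1_def[symmetric] a2_def[symmetric] a3_def[symmetric] by (simp add: real_sqrt_mult)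
  also have "\<dots> \<le> 4 * (1 / sqrt a1 * (1 / sqrt a2) * (1 / sqrt a3))"
    by (rule mult_right_mono[OF n]) (use a in auto)
  finally show ?thesis unfolding k .
qed


lemma phi_weight_integrable: "set_integrable lborel cube3 phi_weight"
  unfolding set_integrable_def
proof (rule integrableI_bounded)
  show "(\<lambda>x. indicat_real cube3 x *\<^sub>R phi_weight x) \<in> borel_measurable lborel" by measurable
  have "(\<integral>\<^sup>+ x. ennreal (norm (indicat_real cube3 x *\<^sub>R phi_weight x)) \<partial>lborel)
      \<le> (\<integral>\<^sup>+ x. ennreal (4 * (kk (fst x) * kk (fst (snd x)) * kk (snd (snd x)))) \<partial>lborel)"
  proof (rule nn_integral_mono)
    fix x :: "real \<times> real \<times> real"
    show "ennreal (norm (indicat_real cube3 x *\<^sub>R phi_weight x)) \<le> ennreal (4 * (kk (fst x) * kk (fst (snd x)) * kk (snd (snd x))))"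
      using phi_weight_bound[of x] phi_weight_nonneg[of x] kk_nonneg
      by (cases "x \<in> cube3") (auto intro!: ennreal_leI mult_nonneg_nonneg)
  qed
  also have "\<dots> = (\<integral>\<^sup>+ x. ennreal 4 * (ennreal (kk (fst x)) * ennreal (kk (fst (snd x))) * ennreal (kk (snd (snd x)))) \<partial>lborel)"
    by (simp add: ennreal_mult kk_nonneg mult_nonneg_nonneg)
  also have "\<dots> = ennreal 4 * ((\<integral>\<^sup>+ x. ennreal (kk x) \<partial>lborel) * (\<integral>\<^sup>+ x. ennreal (kk x) \<partial>lborel) * (\<integral>\<^sup>+ x. ennreal (kk x) \<partial>lborel))"
    by (subst nn_integral_cmult) (simp_all add: nn_prod3[of "\<lambda>x. ennreal (kk x)" "\<lambda>x. ennreal (kk x)" "\<lambda>x. ennreal (kk x)", simplified])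
  also have "(\<integral>\<^sup>+ x. ennreal (kk x) \<partial>lborel) = ennreal (2 * sqrt 2)"
    unfolding kk_def by (rule k_int)
  finally show "(\<integral>\<^sup>+ x. ennreal (norm (indicat_real cube3 x *\<^sub>R phi_weight x)) \<partial>lborel) < \<infinity>"
    by (rule order.strict_trans1) (simp add: ennreal_mult_less_top)
qed

lemma phi_weight_pos: "0 < set_lebesgue_integral lborel cube3 phi_weight"
proof -
  let ?g = "\<lambda>x. indicat_real cube3 x *\<^sub>R phi_weight x"
  have meas: "?g \<in> borel_measurable lborel" by measurable
  have int: "integrable lborel ?g" using phi_weight_integrable unfolding set_integrable_def .
  have nn: "\<And>x. 0 \<le> ?g x" by (auto simp: indicator_def phi_weight_nonneg)
  have eq: "(\<integral>\<^sup>+ x. ennreal (?g x) \<partial>lborel) = ennreal (integral\<^sup>L lborel ?g)"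
    by (rule nn_integral_eq_integral[OF int]) (intro AE_I2, use nn in simp)
  have "0 < (\<integral>\<^sup>+ x. ennreal (?g x) \<partial>lborel)"
  proof -
    have "(\<integral>\<^sup>+ m. (indicator {0..1/2::real} (fst m) :: ennreal) * (indicator {0..1/2::real} (fst (snd m)) :: ennreal) * (indicator {0..1/2::real} (snd (snd m)) :: ennreal) \<partial>lborel)
       = (\<integral>\<^sup>+ x. indicator {0..1/2::real} x \<partial>lborel) * (\<integral>\<^sup>+ x. indicator {0..1/2::real} x \<partial>lborel) * (\<integral>\<^sup>+ x. indicator {0..1/2::real} x \<partial>lborel)"
      by (rule nn_prod3) auto
    also have "\<dots> > 0" by (simp add: ennreal_zero_less_mult_iff ennreal_inverse_positive)
    finally have e: "0 < (\<integral>\<^sup>+ m. (indicator {0..1/2::real} (fst m) :: ennreal) * (indicator {0..1/2::real} (fst (snd m)) :: ennreal) * (indicator {0..1/2::real} (snd (snd m)) :: ennreal) \<partial>lborel)" .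
    have "(\<integral>\<^sup>+ m. (indicator {0..1/2::real} (fst m) :: ennreal) * (indicator {0..1/2::real} (fst (snd m)) :: ennreal) * (indicator {0..1/2::real} (snd (snd m)) :: ennreal) \<partial>lborel)
        \<le> (\<integral>\<^sup>+ x. ennreal (?g x) \<partial>lborel)"
    proof (rule nn_integral_mono)
      fix m :: "real \<times> real \<times> real"
      show "(indicator {0..1/2::real} (fst m) :: ennreal) * (indicator {0..1/2::real} (fst (snd m)) :: ennreal) * (indicator {0..1/2::real} (snd (snd m)) :: ennreal) \<le> ennreal (?g m)"
      proof (cases "fst m \<in> {0..1/2} \<and> fst (snd m) \<in> {0..1/2} \<and> snd (snd m) \<in> {0..1/2}")
        case True
        then have c: "m \<in> cube3" unfolding cube3_mem by auto
        have "1 \<le> phi_weight m"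
        proof -
          have q1: "sqrt ((1 - fst m) * (1 - fst (snd m)) * (1 - snd (snd m))) \<le> 1"
            using True by (auto intro!: mult_le_one)
          have q2: "0 < sqrt ((1 - fst m) * (1 - fst (snd m)) * (1 - snd (snd m)))"
            using True by auto
          have q3: "1 \<le> sqrt (1 + fst (snd m)) * (1 + snd (snd m))"
          proof -
            have s1: "1 \<le> sqrt (1 + fst (snd m))" using True by simp
            have "1 \<le> 1 + snd (snd m)" using True by simp
            from mult_mono[OF s1 this] show ?thesis using True by simp
          qed
          show ?thesis unfolding phi_weight_alt le_divide_eq_1_pos[OF q2] using q1 q3 by linarith
        qed
        then show ?thesis using True c by (auto simp: indicator_def)
      next
        case False
        then show ?thesis by (auto simp: indicator_def)
      qed
    qed
    then show ?thesis using e by order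
  qed
  then have "0 < integral\<^sup>L lborel ?g" using eq by simp
  then show ?thesis unfolding set_lebesgue_integral_def by simp
qed



lemma phi_point_alt: "phi_point xi u1 u2 u3 m =
  (1 + snd (snd m))/2 * ((1 + fst (snd m))/2 * ((1 + fst m)/2 * xi + (1 - fst m)/2 * u1) + (1 - fst (snd m))/2 * u2)
      + (1 - snd (snd m))/2 * u3"
  unfolding phi_point_def by (simp add: case_prod_beta)

lemma conv_range:
  fixes lo hi a b m :: real
  assumes "lo \<le> a" "a \<le> hi" "lo \<le> b" "b \<le> hi" "-1 \<le> m" "m \<le> 1"
  shows "lo \<le> (1 + m)/2 * a + (1 - m)/2 * b \<and> (1 + m)/2 * a + (1 - m)/2 * b \<le> hi"
proof -
  have e: "(1 + m)/2 * a + (1 - m)/2 * b = b + (1 + m)/2 * (a - b)" by (simp add: field_simps)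
  have s: "0 \<le> (1 + m)/2" "(1 + m)/2 \<le> 1" using assms by auto
  show ?thesis
  proof (cases "a \<le> b")
    case True
    have "(1 + m)/2 * (a - b) \<ge> 1 * (a - b)" using s True by (intro mult_right_mono_neg) auto
    moreover have "(1 + m)/2 * (a - b) \<le> 0" using s True by (simp add: mult_nonneg_nonpos)
    ultimately show ?thesis unfolding e using assms by auto
  next
    case False
    have "(1 + m)/2 * (a - b) \<le> 1 * (a - b)" using s False by (intro mult_right_mono) auto
    moreover have "(1 + m)/2 * (a - b) \<ge> 0" using s False by simp
    ultimately show ?thesis unfolding e using assms by auto
  qed
qed

lemma phi_point_range:
  assumes "m \<in> cube3" "lo \<le> xi" "xi \<le> hi" "lo \<le> u1" "u1 \<le> hi" "lo \<le> u2" "u2 \<le> hi" "lo \<le> u3" "u3 \<le> hi"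
  shows "lo \<le> phi_point xi u1 u2 u3 m \<and> phi_point xi u1 u2 u3 m \<le> hi"
proof -
  have m: "-1 \<le> fst m" "fst m \<le> 1" "-1 \<le> fst (snd m)" "fst (snd m) \<le> 1" "-1 \<le> snd (snd m)" "snd (snd m) \<le> 1"
    using assms(1) unfolding cube3_mem by auto
  have 1: "lo \<le> (1 + fst m)/2 * xi + (1 - fst m)/2 * u1 \<and> (1 + fst m)/2 * xi + (1 - fst m)/2 * u1 \<le> hi"
    by (rule conv_range) (use assms m in auto)
  have 2: "lo \<le> (1 + fst (snd m))/2 * ((1 + fst m)/2 * xi + (1 - fst m)/2 * u1) + (1 - fst (snd m))/2 * u2
     \<and> (1 + fst (snd m))/2 * ((1 + fst m)/2 * xi + (1 - fst m)/2 * u1) + (1 - fst (snd m))/2 * u2 \<le> hi"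
    by (rule conv_range) (use assms m 1 in auto)
  show ?thesis unfolding phi_point_alt
    by (rule conv_range) (use assms m 2 in auto)
qed

lemma phi_point_upper:
  assumes "m \<in> cube3" "0 \<le> xi" "0 \<le> u1" "u1 \<le> 1" "0 \<le> u2" "u2 \<le> 1" "0 \<le> u3" "u3 \<le> 1"
  shows "phi_point xi u1 u2 u3 m \<le> xi + ((1 - fst m) + (1 - fst (snd m)) + (1 - snd (snd m)))/2"
proof -
  have m: "-1 \<le> fst m" "fst m \<le> 1" "-1 \<le> fst (snd m)" "fst (snd m) \<le> 1" "-1 \<le> snd (snd m)" "snd (snd m) \<le> 1"
    using assms(1) unfolding cube3_mem by auto
  define Y where "Y = (1 + fst m)/2 * xi + (1 - fst m)/2 * u1"
  define X where "X = (1 + fst (snd m))/2 * Y + (1 - fst (snd m))/2 * u2"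
  have Y0: "0 \<le> Y" unfolding Y_def using assms m by (intro add_nonneg_nonneg mult_nonneg_nonneg) auto
  have X0: "0 \<le> X" unfolding X_def using assms m Y0 by (intro add_nonneg_nonneg mult_nonneg_nonneg) auto
  have a: "(1 + fst m)/2 * xi \<le> xi" using assms m by (intro mult_left_le_one_le) auto
  have b: "(1 - fst m)/2 * u1 \<le> (1 - fst m)/2" using assms m by (intro mult_left_le) auto
  have Y1: "Y \<le> xi + (1 - fst m)/2" unfolding Y_def using a b by linarith
  have c: "(1 + fst (snd m))/2 * Y \<le> Y" using Y0 m by (intro mult_left_le_one_le) auto
  have d: "(1 - fst (snd m))/2 * u2 \<le> (1 - fst (snd m))/2" using assms m by (intro mult_left_le) auto
  have X1: "X \<le> Y + (1 - fst (snd m))/2" unfolding X_def using c d by linarith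
  have e: "(1 + snd (snd m))/2 * X \<le> X" using X0 m by (intro mult_left_le_one_le) auto
  have f: "(1 - snd (snd m))/2 * u3 \<le> (1 - snd (snd m))/2" using assms m by (intro mult_left_le) auto
  have "phi_point xi u1 u2 u3 m = (1 + snd (snd m))/2 * X + (1 - snd (snd m))/2 * u3"
    unfolding phi_point_alt X_def Y_def ..
  also have "\<dots> \<le> X + (1 - snd (snd m))/2" using e f by linarith
  finally have "phi_point xi u1 u2 u3 m \<le> X + (1 - snd (snd m))/2" .
  moreover have "xi + ((1 - fst m) + (1 - fst (snd m)) + (1 - snd (snd m)))/2 = xi + (1 - fst m)/2 + (1 - fst (snd m))/2 + (1 - snd (snd m))/2"
    by (simp add: field_simps)
  ultimately show ?thesis using X1 Y1 by linarith
qed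

lemma phi_point_cont: "continuous_on A (phi_point xi u1 u2 u3)"
  unfolding phi_point_alt[abs_def] by (intro continuous_intros) auto

lemma phi_point_reflect: "phi_point (1 - eta) u1 u2 u3 m = 1 - phi_point eta (1 - u1) (1 - u2) (1 - u3) m"
  unfolding phi_point_alt by (simp add: field_simps)



definition Rind :: "real \<times> real \<times> real \<Rightarrow> real" where
  "Rind m = (if fst m \<le> fst (snd m) \<and> fst (snd m) < 1 \<and> fst m \<le> snd (snd m) \<and> snd (snd m) < 1 then 1 else 0)"

lemma Rind_meas[measurable]: "Rind \<in> borel_measurable borel"
  unfolding Rind_def by measurable

lemma R_integral:
  fixes psi :: "real \<Rightarrow> real" and a b I :: real
  assumes ab: "a \<le> b" "b < 1" and cont: "continuous_on {a..b} psi" and nn: "\<And>x. x \<in> {a..b} \<Longrightarrow> 0 \<le> psi x"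
    and I: "((\<lambda>x. psi x * (1 - x)^2) has_integral I) {a..b}"
  shows "integrable lborel (\<lambda>m. Rind m * (indicator {a..b} (fst m) * psi (fst m)))
      \<and> integral\<^sup>L lborel (\<lambda>m. Rind m * (indicator {a..b} (fst m) * psi (fst m))) = I"
proof -
  define psi1 where "psi1 x = indicator {a..b} x * psi x" for x
  have p1m[measurable]: "psi1 \<in> borel_measurable borel"
    unfolding psi1_def using borel_measurable_continuous_on_indicator[OF _ cont] by simp
  have p1n: "0 \<le> psi1 x" for x unfolding psi1_def using nn by (auto simp: indicator_def)
  have I0: "0 \<le> I"
    using has_integral_nonneg[OF I] nn ab by (auto intro!: mult_nonneg_nonneg)
  have "(\<integral>\<^sup>+ m. ennreal (Rind m * psi1 (fst m)) \<partial>lborel)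
      = (\<integral>\<^sup>+ x. \<integral>\<^sup>+ y. ennreal (Rind (x, y) * psi1 x) \<partial>lborel \<partial>lborel)"
    unfolding lborel3_eq
    by (subst lborel_pair.nn_integral_fst[symmetric]) (auto simp: lborel_prod)
  also have "\<dots> = (\<integral>\<^sup>+ x. \<integral>\<^sup>+ y. ennreal (psi1 x) * indicator ({x..<1} \<times> {x..<1}) y \<partial>lborel \<partial>lborel)"
    by (intro nn_integral_cong) (auto simp: Rind_def indicator_def)
  also have "\<dots> = (\<integral>\<^sup>+ x. ennreal (psi1 x) * emeasure (lborel \<Otimes>\<^sub>M lborel) ({x..<1} \<times> {x..<1::real}) \<partial>lborel)"
    unfolding lborel_prod[symmetric]
    by (subst nn_integral_cmult) (auto simp: nn_integral_indicator intro!: borel_measurable_indicator pair_measureI)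
  also have "\<dots> = (\<integral>\<^sup>+ x. ennreal (indicator {a..b} x * (psi x * (1 - x)^2)) \<partial>lborel)"
  proof (intro nn_integral_cong)
    fix x :: real
    show "ennreal (psi1 x) * emeasure (lborel \<Otimes>\<^sub>M lborel) ({x..<1} \<times> {x..<1::real}) = ennreal (indicator {a..b} x * (psi x * (1 - x)^2))"
    proof (cases "x \<in> {a..b}")
      case True
      then have "x \<le> 1" using ab by auto
      then have "emeasure (lborel \<Otimes>\<^sub>M lborel) ({x..<1} \<times> {x..<1::real}) = ennreal ((1 - x)^2)"
        by (subst lborel.emeasure_pair_measure_Times) (auto simp: ennreal_mult[symmetric] power2_eq_square)
      then show ?thesis using True nn[OF True] by (simp add: psi1_def ennreal_mult[symmetric])
    next
      case False
      then show ?thesis by (simp add: psi1_def)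
    qed
  qed
  also have "\<dots> = ennreal I"
    by (rule nn_integral_has_integral_lebesgue) (use nn I in auto)
  finally have e: "(\<integral>\<^sup>+ m. ennreal (Rind m * psi1 (fst m)) \<partial>lborel) = ennreal I" .
  have "integrable lborel (\<lambda>m. Rind m * psi1 (fst m)) \<and> integral\<^sup>L lborel (\<lambda>m. Rind m * psi1 (fst m)) = I"
    by (rule nn_integral_eq_integrable[THEN iffD1, OF _ _ I0 e]) (auto simp: Rind_def p1n)
  then show ?thesis unfolding psi1_def .
qed



lemma R_geom:
  assumes m: "m \<in> cube3" and r: "1 - delta \<le> fst m" "fst m \<le> 1 - 2*xi" "fst m \<le> fst (snd m)" "fst (snd m) < 1"
      "fst m \<le> snd (snd m)" "snd (snd m) < 1"
    and xd: "0 < xi" "delta \<le> 1/4"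
    and u: "0 \<le> u1" "u1 \<le> 1" "0 \<le> u2" "u2 \<le> 1" "0 \<le> u3" "u3 \<le> 1"
  shows "phi_point xi u1 u2 u3 m \<le> 2 * (1 - fst m)" and "1 / (1 - fst m) \<le> phi_weight m"
proof -
  have "phi_point xi u1 u2 u3 m \<le> xi + ((1 - fst m) + (1 - fst (snd m)) + (1 - snd (snd m)))/2"
    by (rule phi_point_upper) (use m xd u in auto)
  then show "phi_point xi u1 u2 u3 m \<le> 2 * (1 - fst m)" using r by (simp add: field_simps)
  define a1 where "a1 = 1 - fst m"
  define a2 where "a2 = 1 - fst (snd m)"
  define a3 where "a3 = 1 - snd (snd m)"
  have a: "0 < a2" "a2 \<le> a1" "0 < a3" "a3 \<le> a1" "a1 \<le> 1/4" "0 < a1"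
    using r xd unfolding a1_def a2_def a3_def by auto
  have "a1 * a2 * a3 \<le> a1 * a1 * 1"
    using a by (intro mult_mono) auto
  then have "sqrt (a1 * a2 * a3) \<le> sqrt (a1 * a1)"
    by (intro real_sqrt_le_mono) simp
  then have s1: "sqrt (a1 * a2 * a3) \<le> a1"
    using a by simp
  have s2: "0 < sqrt (a1 * a2 * a3)" using a by simp
  have n1: "1 \<le> sqrt (1 + fst (snd m))" using r xd by simp
  have n2: "1 \<le> 1 + snd (snd m)" using r xd by simp
  have n: "1 \<le> sqrt (1 + fst (snd m)) * (1 + snd (snd m))"
    using mult_mono[OF n1 n2] n1 by simp
  have "1 / a1 \<le> 1 / sqrt (a1 * a2 * a3)"
    using s1 s2 a by (intro divide_left_mono) (auto intro!: mult_pos_pos)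
  also have "\<dots> \<le> sqrt (1 + fst (snd m)) * (1 + snd (snd m)) / sqrt (a1 * a2 * a3)"
    using n s2 by (intro divide_right_mono) auto
  finally show "1 / (1 - fst m) \<le> phi_weight m"
    unfolding phi_weight_alt a1_def[symmetric] a2_def[symmetric] a3_def[symmetric] .
qed



definition PhiF :: "(real \<Rightarrow> real) \<Rightarrow> (real \<Rightarrow> real) \<Rightarrow> real \<Rightarrow> real \<Rightarrow> real" where
  "PhiF ph ph1 B0 a = a * ph1 (2*a) / 2 - ph (2*a) / 4 + B0 * a^2 / 2"

lemma Phi_integral:
  fixes ph ph1 ph2 :: "real \<Rightarrow> real"
  assumes d1: "\<And>u. 0 < u \<Longrightarrow> u < 1 \<Longrightarrow> (ph has_real_derivative ph1 u) (at u)"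
    and d2: "\<And>u. 0 < u \<Longrightarrow> u < 1 \<Longrightarrow> (ph1 has_real_derivative ph2 u) (at u)"
    and s: "0 < s" "s \<le> delta" "delta \<le> 1/4"
  shows "((\<lambda>x. (ph2 (2*(1-x)) + B0) / (1-x) * (1-x)^2) has_integral (PhiF ph ph1 B0 delta - PhiF ph ph1 B0 s)) {1-delta..1-s}"
proof -
  have "((\<lambda>x. (1-x) * (ph2 (2*(1-x)) + B0)) has_integral ((- PhiF ph ph1 B0 (1 - (1-s))) - (- PhiF ph ph1 B0 (1 - (1-delta))))) {1-delta..1-s}"
  proof (rule fundamental_theorem_of_calculus)
    show "1 - delta \<le> 1 - s" using s by simp
    fix x assume x: "x \<in> {1-delta..1-s}"
    have y: "0 < 2*(1-x)" "2*(1-x) < 1" using x s by auto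
    have h0: "((\<lambda>x. ph (2*(1-x))) has_real_derivative ph1 (2*(1-x)) * (-2)) (at x)"
      by (rule DERIV_chain2[of ph, where g="\<lambda>x. 2*(1-x)", OF d1[OF y]]) (auto intro!: derivative_eq_intros)
    have h1: "((\<lambda>x. ph1 (2*(1-x))) has_real_derivative ph2 (2*(1-x)) * (-2)) (at x)"
      by (rule DERIV_chain2[of ph1, where g="\<lambda>x. 2*(1-x)", OF d2[OF y]]) (auto intro!: derivative_eq_intros)
    have "((\<lambda>x. - PhiF ph ph1 B0 (1 - x)) has_real_derivative (1-x) * (ph2 (2*(1-x)) + B0)) (at x)"
      unfolding PhiF_def
      apply (intro h0[THEN DERIV_cong] h1[THEN DERIV_cong] derivative_eq_intros refl)
      apply (rule refl | simp)+
      apply (simp add: field_simps)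
      done
    then show "((\<lambda>x. - PhiF ph ph1 B0 (1 - x)) has_vector_derivative (1-x) * (ph2 (2*(1-x)) + B0)) (at x within {1-delta..1-s})"
      by (simp add: has_real_derivative_iff_has_vector_derivative[symmetric] has_field_derivative_at_within)
  qed
  then have "((\<lambda>x. (1-x) * (ph2 (2*(1-x)) + B0)) has_integral (PhiF ph ph1 B0 delta - PhiF ph ph1 B0 s)) {1-delta..1-s}"
    by simp
  then show ?thesis
    by (rule has_integral_cong[THEN iffD1, rotated]) (use s in \<open>auto simp: power2_eq_square\<close>)
qed



lemma core:
  fixes ph qa qb :: "real \<Rightarrow> real" and c u1 u2 u3 d :: real
  assumes u: "0 < u1" "u1 < 1" "0 < u2" "u2 < 1" "0 < u3" "u3 < 1"
    and d1: "\<And>u. 0 < u \<Longrightarrow> u < 1 \<Longrightarrow> (ph has_real_derivative qa u) (at u)"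
    and d2: "\<And>u. 0 < u \<Longrightarrow> u < 1 \<Longrightarrow> (qa has_real_derivative qb u) (at u)"
    and cont: "continuous_on {0<..<1} qb"
    and neg: "\<And>u. 0 < u \<Longrightarrow> u < 1 \<Longrightarrow> qa u < 0"
    and d: "0 < d" and dec: "\<And>u v. 0 < u \<Longrightarrow> u \<le> v \<Longrightarrow> v < d \<Longrightarrow> qb v \<le> qb u"
    and lim: "filterlim ph at_top (at_right 0)"
  shows "filterlim (\<lambda>xi. LINT m:cube3|lborel. (c - qb (phi_point xi u1 u2 u3 m)) * phi_weight m) at_bot (at_right 0)"
proof -
  define \<delta> where "\<delta> = min (1/4) (d/4)"
  have \<delta>: "0 < \<delta>" "\<delta> \<le> 1/4" "2*\<delta> < d" using d by (auto simp: \<delta>_def)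
  define B0 where "B0 = max 0 (- qb (2*\<delta>))"
  have B0: "0 \<le> B0" by (simp add: B0_def)
  have E0: "0 \<le> qb s + B0" if "0 < s" "s \<le> 2*\<delta>" for s
  proof -
    have "qb (2*\<delta>) \<le> qb s" using dec[of s "2*\<delta>"] \<delta> that by auto
    then show ?thesis unfolding B0_def by linarith
  qed
  define U where "U = max (max u1 u2) (max u3 (2*\<delta>))"
  have U: "U < 1" "u1 \<le> U" "u2 \<le> U" "u3 \<le> U" "2*\<delta> \<le> U" using u \<delta> by (auto simp: U_def)
  have contU: "continuous_on {2*\<delta>..U} qb" by (rule continuous_on_subset[OF cont]) (use \<delta> U in auto)
  have "\<exists>M. \<forall>u\<in>{2*\<delta>..U}. \<bar>qb u\<bar> \<le> M"
    using compact_imp_bounded[OF compact_continuous_image[OF contU compact_Icc]] unfolding bounded_iff by auto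
  then obtain M2 where M2: "\<forall>u\<in>{2*\<delta>..U}. \<bar>qb u\<bar> \<le> M2" by blast
  define Cp where "Cp = max 0 (c + B0 + \<bar>M2\<bar>)"
  have Gb: "c - qb u \<le> Cp" if u0: "0 < u" "u \<le> U" for u
  proof (cases "u \<le> 2*\<delta>")
    case True
    then have "qb (2*\<delta>) \<le> qb u" using dec[of u "2*\<delta>"] \<delta> u0 by auto
    then show ?thesis unfolding Cp_def B0_def by auto
  next
    case False
    then have "\<bar>qb u\<bar> \<le> M2" using M2 u0 by auto
    then show ?thesis unfolding Cp_def using B0 by auto
  qed
  have cB: "c + B0 \<le> Cp" unfolding Cp_def by auto
  have Cp0: "0 \<le> Cp" unfolding Cp_def by auto
  define W where "W = (LINT m:cube3|lborel. phi_weight m)"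
  define I where "I xi = (LINT m:cube3|lborel. (c - qb (phi_point xi u1 u2 u3 m)) * phi_weight m)" for xi
  define Phi where "Phi = PhiF ph qa B0"
  have main: "I xi \<le> Cp * W - (Phi \<delta> - Phi (2*xi))" if xi: "0 < xi" "2*xi < \<delta>" for xi
  proof -
    define lo where "lo = min xi (min u1 (min u2 u3))"
    have lo: "0 < lo" "lo \<le> xi" "lo \<le> u1" "lo \<le> u2" "lo \<le> u3" using xi u by (auto simp: lo_def)
    have xiU: "xi \<le> U" using xi \<delta> U by linarith
    have rng: "lo \<le> phi_point xi u1 u2 u3 m \<and> phi_point xi u1 u2 u3 m \<le> U" if "m \<in> cube3" for m
      by (rule phi_point_range) (use that lo xiU U in auto)
    have sub: "phi_point xi u1 u2 u3 ` cube3 \<subseteq> {0<..<1}"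
      using rng lo U by fastforce
    have contG: "continuous_on cube3 (\<lambda>m. c - qb (phi_point xi u1 u2 u3 m))"
      by (intro continuous_on_diff continuous_on_const continuous_on_compose2[OF cont phi_point_cont sub])
    have contG': "continuous_on {lo..U} (\<lambda>u. c - qb u)"
      by (intro continuous_on_diff continuous_on_const continuous_on_subset[OF cont]) (use lo U in auto)
    have "\<exists>M. \<forall>u\<in>{lo..U}. \<bar>c - qb u\<bar> \<le> M"
      using compact_imp_bounded[OF compact_continuous_image[OF contG' compact_Icc]] unfolding bounded_iff by auto
    then obtain Mx where Mx: "\<forall>u\<in>{lo..U}. \<bar>c - qb u\<bar> \<le> Mx" by blast
    have measG: "(\<lambda>m. indicator cube3 m *\<^sub>R ((c - qb (phi_point xi u1 u2 u3 m)) * phi_weight m)) \<in> borel_measurable lborel"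
    proof -
      have "(\<lambda>m. indicator cube3 m *\<^sub>R (c - qb (phi_point xi u1 u2 u3 m))) \<in> borel_measurable borel"
        by (rule borel_measurable_continuous_on_indicator[OF cube3_borel contG])
      then have "(\<lambda>m. indicator cube3 m *\<^sub>R (c - qb (phi_point xi u1 u2 u3 m)) * phi_weight m) \<in> borel_measurable borel"
        by measurable
      then show ?thesis by (simp add: mult.assoc)
    qed
    have intG: "set_integrable lborel cube3 (\<lambda>m. (c - qb (phi_point xi u1 u2 u3 m)) * phi_weight m)"
    proof (rule set_integrable_bound[of _ _ "\<lambda>m. Mx * phi_weight m"])
      show "set_integrable lborel cube3 (\<lambda>m. Mx * phi_weight m)"
        by (rule set_integrable_mult_right) (rule phi_weight_integrable)
      show "set_borel_measurable lborel cube3 (\<lambda>m. (c - qb (phi_point xi u1 u2 u3 m)) * phi_weight m)"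
        unfolding set_borel_measurable_def by (rule measG)
      show "AE m in lborel. m \<in> cube3 \<longrightarrow> norm ((c - qb (phi_point xi u1 u2 u3 m)) * phi_weight m) \<le> norm (Mx * phi_weight m)"
      proof (intro AE_I2 impI)
        fix m assume m: "m \<in> cube3"
        have w0: "0 \<le> phi_weight m" by (rule phi_weight_nonneg[OF m])
        have b: "\<bar>c - qb (phi_point xi u1 u2 u3 m)\<bar> \<le> Mx" using Mx rng[OF m] by auto
        then have "\<bar>c - qb (phi_point xi u1 u2 u3 m)\<bar> * phi_weight m \<le> Mx * phi_weight m"
          by (rule mult_right_mono[OF _ w0])
        then show "norm ((c - qb (phi_point xi u1 u2 u3 m)) * phi_weight m) \<le> norm (Mx * phi_weight m)"
          using w0 order_trans[OF abs_ge_zero b] by (simp add: abs_mult)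
      qed
    qed
    define psi where "psi x = (qb (2*(1-x)) + B0) / (1-x)" for x
    define r where "r m = Rind m * (indicator {1-\<delta>..1-2*xi} (fst m) * psi (fst m))" for m
    have Rint: "integrable lborel r \<and> integral\<^sup>L lborel r = Phi \<delta> - Phi (2*xi)"
      unfolding r_def
    proof (rule R_integral)
      show "1-\<delta> \<le> 1-2*xi" "1-2*xi < 1" using xi by auto
      have s2: "(\<lambda>x. 2*(1-x)) ` {1-\<delta>..1-2*xi} \<subseteq> {0<..<1}" using xi \<delta> by auto
      show "continuous_on {1-\<delta>..1-2*xi} psi" unfolding psi_def
        by (intro continuous_on_divide continuous_on_add continuous_on_const continuous_on_diff continuous_on_id
            continuous_on_compose2[OF cont _ s2] continuous_on_mult) (use xi in auto)
      show "0 \<le> psi x" if "x \<in> {1-\<delta>..1-2*xi}" for x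
        unfolding psi_def using that xi E0[of "2*(1-x)"] by (auto intro!: divide_nonneg_nonneg)
      show "((\<lambda>x. psi x * (1-x)^2) has_integral (Phi \<delta> - Phi (2*xi))) {1-\<delta>..1-2*xi}"
        unfolding psi_def Phi_def by (rule Phi_integral[OF d1 d2]) (use xi \<delta> in auto)
    qed
    have r_cube: "m \<in> cube3" if "r m \<noteq> 0" for m
      using that \<delta> xi unfolding r_def Rind_def cube3_mem by (auto split: if_splits simp: indicator_def)
    have intR: "set_integrable lborel cube3 r"
      unfolding set_integrable_def by (rule integrable_mult_indicator[OF _ Rint[THEN conjunct1]]) simp
    have setR: "(LINT m:cube3|lborel. r m) = Phi \<delta> - Phi (2*xi)"
    proof -
      have "(LINT m:cube3|lborel. r m) = integral\<^sup>L lborel r"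
        unfolding set_lebesgue_integral_def
        by (rule Bochner_Integration.integral_cong) (use r_cube in \<open>auto simp: indicator_def\<close>)
      then show ?thesis using Rint by simp
    qed
    have pw: "(c - qb (phi_point xi u1 u2 u3 m)) * phi_weight m \<le> Cp * phi_weight m - r m" if m: "m \<in> cube3" for m
    proof -
      have w0: "0 \<le> phi_weight m" by (rule phi_weight_nonneg[OF m])
      have p: "lo \<le> phi_point xi u1 u2 u3 m" "phi_point xi u1 u2 u3 m \<le> U" using rng[OF m] by auto
      show ?thesis
      proof (cases "r m = 0")
        case True
        have "(c - qb (phi_point xi u1 u2 u3 m)) * phi_weight m \<le> Cp * phi_weight m"
          by (rule mult_right_mono[OF Gb w0]) (use p lo in auto)
        then show ?thesis using True by simp
      next
        case False
        then have R: "1 - \<delta> \<le> fst m" "fst m \<le> 1 - 2*xi" "fst m \<le> fst (snd m)" "fst (snd m) < 1"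
            "fst m \<le> snd (snd m)" "snd (snd m) < 1"
          unfolding r_def Rind_def by (auto split: if_splits simp: indicator_def)
        have rm: "r m = psi (fst m)" using R unfolding r_def Rind_def by simp
        have g1: "phi_point xi u1 u2 u3 m \<le> 2 * (1 - fst m)" and g2: "1 / (1 - fst m) \<le> phi_weight m"
          using R_geom[OF m R xi(1) \<delta>(2), of u1 u2 u3] u by auto
        define a1 where "a1 = 1 - fst m"
        have a1: "0 < a1" "a1 \<le> \<delta>" "2*xi \<le> a1" using R xi unfolding a1_def by auto
        define E where "E = qb (2*a1) + B0"
        have E: "0 \<le> E" unfolding E_def using E0[of "2*a1"] a1 by auto
        have "qb (2*a1) \<le> qb (phi_point xi u1 u2 u3 m)"
          using dec[of "phi_point xi u1 u2 u3 m" "2*a1"] g1 p lo a1 \<delta> unfolding a1_def by auto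
        then have G: "c - qb (phi_point xi u1 u2 u3 m) \<le> (c + B0) - E" unfolding E_def by linarith
        have "(c - qb (phi_point xi u1 u2 u3 m)) * phi_weight m \<le> ((c + B0) - E) * phi_weight m"
          by (rule mult_right_mono[OF G w0])
        also have "\<dots> = (c + B0) * phi_weight m - E * phi_weight m" by (simp add: algebra_simps)
        also have "\<dots> \<le> Cp * phi_weight m - E * phi_weight m"
          using mult_right_mono[OF cB w0] by linarith
        also have "E * phi_weight m \<ge> E * (1 / a1)"
          using g2 E unfolding a1_def by (intro mult_left_mono) auto
        then have "Cp * phi_weight m - E * phi_weight m \<le> Cp * phi_weight m - E / a1" by simp
        also have "E / a1 = r m" unfolding rm psi_def E_def a1_def by simp
        finally show ?thesis .
      qed
    qed
    have intB: "set_integrable lborel cube3 (\<lambda>m. Cp * phi_weight m - r m)"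
      by (intro set_integral_diff(1) intR set_integrable_mult_right phi_weight_integrable)
    have "I xi \<le> (LINT m:cube3|lborel. Cp * phi_weight m - r m)"
      unfolding I_def by (rule set_integral_mono[OF intG intB pw])
    also have "\<dots> = Cp * W - (Phi \<delta> - Phi (2*xi))"
      by (subst set_integral_diff(2)) (auto intro!: intR set_integrable_mult_right phi_weight_integrable simp: W_def setR)
    finally show ?thesis .
  qed
  have PhiB: "Phi (2*xi) \<le> - ph (4*xi) / 4 + B0" if xi: "0 < xi" "2*xi < \<delta>" for xi
  proof -
    have "qa (4*xi) < 0" using neg[of "4*xi"] xi \<delta> by auto
    then have "xi * qa (4*xi) \<le> 0" using xi by (simp add: mult_nonneg_nonpos)
    then have t1: "2*xi * qa (2*(2*xi)) / 2 \<le> 0" by simp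
    have "(2*xi)^2 \<le> 1" by (rule power_le_one) (use xi \<delta> in auto)
    then have t2: "B0 * (2*xi)^2 / 2 \<le> B0" using B0 mult_left_mono[of "(2*xi)^2" 1 B0] by auto
    show ?thesis unfolding Phi_def PhiF_def using t1 t2 by simp
  qed
  have "filterlim I at_bot (at_right 0)"
    unfolding filterlim_at_bot
  proof
    fix Z :: real
    have "eventually (\<lambda>v. 4 * (Cp * W - Phi \<delta> + B0 - Z) \<le> ph v) (at_right 0)"
      using lim unfolding filterlim_at_top by auto
    then obtain b where b: "b > 0" "\<And>v. v > 0 \<Longrightarrow> v < b \<Longrightarrow> 4 * (Cp * W - Phi \<delta> + B0 - Z) \<le> ph v"
      unfolding eventually_at_right_field by auto
    show "eventually (\<lambda>xi. I xi \<le> Z) (at_right 0)"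
      unfolding eventually_at_right_field
    proof (intro exI[of _ "min (b/4) (\<delta>/4)"] conjI allI impI)
      show "min (b/4) (\<delta>/4) > 0" using b \<delta> by auto
      fix xi :: real assume "xi > 0" "xi < min (b/4) (\<delta>/4)"
      then have xi: "0 < xi" "2*xi < \<delta>" "4*xi < b" by auto
      have "I xi \<le> Cp * W - (Phi \<delta> - Phi (2*xi))" by (rule main[OF xi(1,2)])
      also have "\<dots> \<le> Cp * W - Phi \<delta> - ph (4*xi) / 4 + B0" using PhiB[OF xi(1,2)] by linarith
      also have "\<dots> \<le> Z"
      proof -
        have "4 * (Cp * W - Phi \<delta> + B0 - Z) \<le> ph (4*xi)" using b(2)[of "4*xi"] xi by auto
        then show ?thesis by (simp add: field_simps)
      qed
      finally show "I xi \<le> Z" .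
    qed
  qed
  then show ?thesis unfolding I_def .
qed



lemma flip1: "filterlim (\<lambda>xi::real. 1 - xi) (at_right 0) (at_left 1)"
  unfolding filterlim_at
proof
  show "eventually (\<lambda>x. 1 - x \<in> {0<..} \<and> 1 - x \<noteq> 0) (at_left (1::real))"
    unfolding eventually_at_left_field by (intro exI[of _ 0]) auto
  show "((\<lambda>x. 1 - x) \<longlongrightarrow> (0::real)) (at_left 1)"
    by (auto intro!: tendsto_eq_intros)
qed

lemma flip2: "filterlim (\<lambda>v::real. 1 - v) (at_left 1) (at_right 0)"
  unfolding filterlim_at
proof
  show "eventually (\<lambda>x. 1 - x \<in> {..<1} \<and> 1 - x \<noteq> 1) (at_right (0::real))"
    unfolding eventually_at_right_field by (intro exI[of _ 1]) auto
  show "((\<lambda>x. 1 - x) \<longlongrightarrow> (1::real)) (at_right 0)"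
    by (auto intro!: tendsto_eq_intros)
qed

lemma pp_in01:
  assumes "m \<in> cube3" "0 < xi" "xi < 1" "0 < u1" "u1 < 1" "0 < u2" "u2 < 1" "0 < u3" "u3 < 1"
  shows "0 < phi_point xi u1 u2 u3 m \<and> phi_point xi u1 u2 u3 m < 1"
proof -
  define lo where "lo = min (min xi u1) (min u2 u3)"
  define hi where "hi = max (max xi u1) (max u2 u3)"
  have "lo \<le> phi_point xi u1 u2 u3 m \<and> phi_point xi u1 u2 u3 m \<le> hi"
    by (rule phi_point_range) (use assms in \<open>auto simp: lo_def hi_def\<close>)
  moreover have "0 < lo" "hi < 1" using assms by (auto simp: lo_def hi_def)
  ultimately show ?thesis by linarith
qed

lemma Mconst_pos: "0 < Mconst"
  unfolding Mconst_def using phi_weight_pos by simp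



theorem lemma5p3:
  fixes f :: "real \<Rightarrow> real" and t x u1 u2 u3 :: real
  assumes "standing_assumptions f"
    and "t > 0"
    and "0 < u3" and "u3 < u2" and "u2 < u1" and "u1 < 1"
  shows "filterlim (\<lambda>xi. Phi1 f t x xi u1 u2 u3) at_bot (at_right 0)
       \<and> filterlim (\<lambda>xi. Phi1 f t x xi u1 u2 u3) at_top (at_left 1)"
proof -
  have u: "0 < u1" "u1 < 1" "0 < u2" "u2 < 1" "0 < u3" "u3 < 1" using assms(3-6) by auto
  have sm: "smooth_on {0<..<1} f" and dneg: "\<forall>u\<in>{0<..<1}. deriv f u < 0"
    and lim0: "filterlim f at_top (at_right 0)" and lim1: "filterlim f at_bot (at_left 1)"
    and e0: "\<exists>d>0. \<forall>u\<in>{0<..<d}. (deriv ^^ 3) f u < 0"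
    and e1: "\<exists>d>0. \<forall>u\<in>{1-d<..<1}. (deriv ^^ 3) f u < 0"
    using assms(1) unfolding standing_assumptions_def by auto
  obtain d0 where d0: "d0 > 0" "\<forall>u\<in>{0<..<d0}. (deriv ^^ 3) f u < 0" using e0 by auto
  obtain d1 where d1: "d1 > 0" "\<forall>u\<in>{1-d1<..<1}. (deriv ^^ 3) f u < 0" using e1 by auto
  define F1 where "F1 = deriv f"
  define F2 where "F2 = (deriv ^^ 2) f"
  define F3 where "F3 = (deriv ^^ 3) f"
  have F2eq: "F2 = deriv F1" by (simp add: F1_def F2_def numeral_2_eq_2)
  have F3eq: "F3 = deriv F2" by (simp add: F2_def F3_def eval_nat_numeral)
  have D1: "(f has_real_derivative F1 u) (at u)" if "0 < u" "u < 1" for u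
    using sm[unfolded smooth_on_def, rule_format, where n=0 and y=u] that DERIV_deriv_iff_real_differentiable
    unfolding F1_def by simp
  have D2: "(F1 has_real_derivative F2 u) (at u)" if "0 < u" "u < 1" for u
    using sm[unfolded smooth_on_def, rule_format, where n=1 and y=u] that DERIV_deriv_iff_real_differentiable
    unfolding F2eq unfolding F1_def by simp
  have D3: "(F2 has_real_derivative F3 u) (at u)" if "0 < u" "u < 1" for u
    using sm[unfolded smooth_on_def, rule_format, where n=2 and y=u] that DERIV_deriv_iff_real_differentiable
    unfolding F3eq unfolding F2_def by simp
  have contF2: "continuous_on {0<..<1} F2"
    by (intro continuous_at_imp_continuous_on ballI DERIV_isCont[OF D3]) auto
  have decr: "F2 v \<le> F2 u" if ab: "a \<le> u" "u \<le> v" "v \<le> b" "\<forall>y\<in>{a..b}. 0 < y \<and> y < 1 \<and> F3 y < 0" for a b u v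
  proof (cases "u = v")
    case False
    then have "u < v" using ab by auto
    have "F2 u > F2 v"
    proof (rule DERIV_neg_imp_decreasing[OF \<open>u < v\<close>])
      fix z assume z: "u \<le> z" "z \<le> v"
      then have "z \<in> {a..b}" using ab by auto
      then have "0 < z" "z < 1" "F3 z < 0" using ab(4) by auto
      then show "\<exists>y. (F2 has_real_derivative y) (at z) \<and> y < 0" using D3 by blast
    qed
    then show ?thesis by simp
  qed simp
  have decL: "F2 v \<le> F2 u" if "0 < u" "u \<le> v" "v < min d0 1" for u v
    by (rule decr[of u u v v]) (use that d0 in \<open>auto simp: F3_def\<close>)
  have decR: "F2 v \<le> F2 u" if "1 - min d1 1 < u" "u \<le> v" "v < 1" for u v
    by (rule decr[of u u v v]) (use that d1 in \<open>auto simp: F3_def\<close>)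
  have Hdd: "(deriv ^^ 2) (H f t x) u = -60*t - F2 u" if "0 < u" "u < 1" for u
  proof -
    have dH: "deriv (H f t x) y = -60*t*y - F1 y" if "0 < y" "y < 1" for y
    proof (rule DERIV_imp_deriv)
      show "(H f t x has_real_derivative -60*t*y - F1 y) (at y)"
        unfolding H_def[abs_def]
        apply (intro D1[OF that, THEN DERIV_cong] derivative_eq_intros refl)
        apply (rule refl | simp)+
        apply (simp add: field_simps)?
        done
    qed
    have "((\<lambda>y. -60*t*y - F1 y) has_real_derivative -60*t - F2 u) (at u)"
      apply (intro D2[OF that, THEN DERIV_cong] derivative_eq_intros refl)
      apply (rule refl | simp)+
      apply (simp add: field_simps)?
      done
    then have "(deriv (H f t x) has_real_derivative -60*t - F2 u) (at u)"
      by (rule has_field_derivative_transform_within_open[of _ _ _ "{0<..<1}"]) (use that dH in auto)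
    then show ?thesis by (simp add: numeral_2_eq_2 DERIV_imp_deriv)
  qed
  have Mp: "0 < Mconst" by (rule Mconst_pos)
  have PhiEq: "Phi1 f t x xi u1 u2 u3 = Mconst * (LINT m:cube3|lborel. (-60*t - F2 (phi_point xi u1 u2 u3 m)) * phi_weight m)"
    if "0 < xi" "xi < 1" for xi
    unfolding Phi1_def
    by (intro arg_cong[where f="\<lambda>z. Mconst * z"] set_lebesgue_integral_cong)
       (use pp_in01[OF _ that u] Hdd in auto)
  have coreA: "filterlim (\<lambda>xi. LINT m:cube3|lborel. (-60*t - F2 (phi_point xi u1 u2 u3 m)) * phi_weight m) at_bot (at_right 0)"
    by (rule core[where ph=f and qa=F1 and qb=F2 and c="-60*t" and d="min d0 1", OF u D1 D2 contF2 _ _ decL lim0]) (use dneg d0 in \<open>auto simp: F1_def\<close>)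
  have A: "filterlim (\<lambda>xi. Phi1 f t x xi u1 u2 u3) at_bot (at_right 0)"
  proof -
    have L: "filterlim (\<lambda>xi. Mconst * (LINT m:cube3|lborel. (-60*t - F2 (phi_point xi u1 u2 u3 m)) * phi_weight m)) at_bot (at_right 0)"
      by (rule filterlim_tendsto_pos_mult_at_bot[OF tendsto_const Mp coreA])
    have ev: "eventually (\<lambda>xi. Phi1 f t x xi u1 u2 u3 = Mconst * (LINT m:cube3|lborel. (-60*t - F2 (phi_point xi u1 u2 u3 m)) * phi_weight m)) (at_right 0)"
      unfolding eventually_at_right_field by (intro exI[of _ 1]) (auto simp: PhiEq)
    show ?thesis by (rule filterlim_cong[OF refl refl ev, THEN iffD2, OF L])
  qed
  define ph where "ph v = - f (1 - v)" for v
  define ph1 where "ph1 v = F1 (1 - v)" for v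
  define ph2 where "ph2 v = - F2 (1 - v)" for v
  have v: "0 < 1 - u1" "1 - u1 < 1" "0 < 1 - u2" "1 - u2 < 1" "0 < 1 - u3" "1 - u3 < 1" using u by auto
  have E1: "(ph has_real_derivative ph1 v) (at v)" if "0 < v" "v < 1" for v
  proof -
    have "((\<lambda>v. f (1 - v)) has_real_derivative F1 (1 - v) * (-1)) (at v)"
      by (rule DERIV_chain2[of f, where g="\<lambda>v. 1 - v", OF D1]) (use that in \<open>auto intro!: derivative_eq_intros\<close>)
    then show ?thesis unfolding ph_def[abs_def] ph1_def using DERIV_minus by fastforce
  qed
  have E2: "(ph1 has_real_derivative ph2 v) (at v)" if "0 < v" "v < 1" for v
  proof -
    have "((\<lambda>v. F1 (1 - v)) has_real_derivative F2 (1 - v) * (-1)) (at v)"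
      by (rule DERIV_chain2[of F1, where g="\<lambda>v. 1 - v", OF D2]) (use that in \<open>auto intro!: derivative_eq_intros\<close>)
    then show ?thesis unfolding ph2_def ph1_def[abs_def] by simp
  qed
  have contph2: "continuous_on {0<..<1} ph2"
    unfolding ph2_def[abs_def]
    by (intro continuous_on_minus continuous_on_compose2[OF contF2] continuous_intros) auto
  have negph1: "ph1 v < 0" if "0 < v" "v < 1" for v
    using dneg that unfolding ph1_def F1_def by auto
  have decph: "ph2 v' \<le> ph2 v" if "0 < v" "v \<le> v'" "v' < min d1 1" for v v'
    unfolding ph2_def using decR[of "1 - v'" "1 - v"] that by auto
  have limph: "filterlim ph at_top (at_right 0)"
  proof -
    have "filterlim (\<lambda>v. f (1 - v)) at_bot (at_right 0)"
      by (rule filterlim_compose[OF lim1 flip2])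
    then show ?thesis unfolding ph_def[abs_def] filterlim_uminus_at_top by simp
  qed
  have coreB: "filterlim (\<lambda>eta. LINT m:cube3|lborel. (60*t - ph2 (phi_point eta (1-u1) (1-u2) (1-u3) m)) * phi_weight m) at_bot (at_right 0)"
    by (rule core[where ph=ph and qa=ph1 and qb=ph2 and c="60*t" and d="min d1 1", OF v E1 E2 contph2 negph1 _ decph limph]) (use d1 in auto)
  define K where "K eta = (LINT m:cube3|lborel. (60*t - ph2 (phi_point eta (1-u1) (1-u2) (1-u3) m)) * phi_weight m)" for eta
  have KB: "filterlim (\<lambda>xi. Mconst * K (1 - xi)) at_bot (at_left 1)"
    by (rule filterlim_tendsto_pos_mult_at_bot[OF tendsto_const Mp filterlim_compose[OF coreB[folded K_def] flip1]])
  have KEq: "Phi1 f t x xi u1 u2 u3 = - (Mconst * K (1 - xi))" if "0 < xi" "xi < 1" for xi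
  proof -
    have "K (1 - xi) = (LINT m:cube3|lborel. (-1) * ((-60*t - F2 (phi_point xi u1 u2 u3 m)) * phi_weight m))"
      unfolding K_def
    proof (intro set_lebesgue_integral_cong ballI allI impI)
      fix m assume "m \<in> cube3"
      have "phi_point (1 - (1 - xi)) u1 u2 u3 m = 1 - phi_point (1 - xi) (1-u1) (1-u2) (1-u3) m"
        by (rule phi_point_reflect)
      then have pe: "1 - phi_point (1 - xi) (1-u1) (1-u2) (1-u3) m = phi_point xi u1 u2 u3 m" by simp
      then show "(60*t - ph2 (phi_point (1 - xi) (1-u1) (1-u2) (1-u3) m)) * phi_weight m
          = (-1) * ((-60*t - F2 (phi_point xi u1 u2 u3 m)) * phi_weight m)"
        unfolding ph2_def pe by (simp add: algebra_simps)
    qed simp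
    also have "\<dots> = - (LINT m:cube3|lborel. (-60*t - F2 (phi_point xi u1 u2 u3 m)) * phi_weight m)"
      by (subst set_integral_mult_right) simp
    finally show ?thesis using PhiEq[OF that] by simp
  qed
  have B: "filterlim (\<lambda>xi. Phi1 f t x xi u1 u2 u3) at_top (at_left 1)"
  proof -
    have L: "filterlim (\<lambda>xi. - (Mconst * K (1 - xi))) at_top (at_left 1)"
      unfolding filterlim_uminus_at_top using KB by simp
    have ev: "eventually (\<lambda>xi. - (Mconst * K (1 - xi)) = Phi1 f t x xi u1 u2 u3) (at_left 1)"
      unfolding eventually_at_left_field by (intro exI[of _ 0]) (auto simp: KEq)
    show ?thesis by (rule filterlim_cong[OF refl refl ev, THEN iffD1, OF L])
  qed
  show ?thesis using A B by blast
qed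

end
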